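(* Let $0<\alpha<1$ and let $y$ be a sufficiently differentiable function on an interval $[0,h_0]$, $h_0>0$. Then, as $h\to 0^+$, $$y(h)-y(0)-h^\alpha\,\Gamma(2-\alpha)\,y^{(\alpha)}(h)=O\left(h^2\right).$$
   Context: The Caputo derivative of order $\alpha\in(0,1)$ is $y^{(\alpha)}(h)=\frac{1}{\Gamma(1-\alpha)}\int_0^h \frac{y'(\xi)}{(h-\xi)^{\alpha}}\,d\xi$. "Sufficiently differentiable" means $y\in C^r$ for some sufficiently large $r$. *)

theory Defs
  imports "HOL-Analysis.Analysis" "HOL-Library.Landau_Symbols"
begin

definition Cr_on :: "nat \<Rightarrow> real set \<Rightarrow> (real \<Rightarrow> real) \<Rightarrow> bool" where
  "Cr_on r S y \<longleftrightarrow> (\<exists>D :: nat \<Rightarrow> real \<Rightarrow> real.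
      (\<forall>x\<in>S. D 0 x = y x) \<and>
      (\<forall>k<r. \<forall>x\<in>S. (D k has_real_derivative D (Suc k) x) (at x within S)) \<and>
      (\<forall>k\<le>r. continuous_on S (D k)))"

definition caputo :: "real \<Rightarrow> (real \<Rightarrow> real) \<Rightarrow> real \<Rightarrow> real" where
  "caputo \<alpha> y h = (1 / Gamma (1 - \<alpha>)) *
      integral {0..h} (\<lambda>\<xi>. deriv y \<xi> / (h - \<xi>) powr \<alpha>)"

end

theory Submission imports Defs begin

lemma powr_int:
  fixes h c :: real
  assumes h: "0 < h" and c: "c > -1"
  shows "((\<lambda>\<xi>. (h-\<xi>) powr c) has_integral h powr (c+1)/(c+1)) {0..h}"
proof -
  define F where "F = (\<lambda>\<xi>::real. -((h-\<xi>) powr (c+1))/(c+1))"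
  have "((\<lambda>\<xi>. (h-\<xi>) powr c) has_integral (F h - F 0)) {0..h}"
  proof (rule fundamental_theorem_of_calculus_interior)
    show "0 \<le> h" using h by simp
    show "continuous_on {0..h} F" unfolding F_def
      using c by (intro continuous_intros continuous_on_powr') auto
    fix x assume x: "x \<in> {0<..<h}"
    have "((\<lambda>\<xi>. (h-\<xi>) powr (c+1)) has_real_derivative (c+1) * (h-x) powr (c+1-1) * (-1)) (at x)"
      using x by (auto intro!: derivative_eq_intros DERIV_chain2[OF has_real_derivative_powr])
    then have "(F has_real_derivative (h-x) powr c) (at x)"
      unfolding F_def using c x by (auto intro!: derivative_eq_intros)
    then show "(F has_vector_derivative (h-x) powr c) (at x)"
      by (simp add: has_real_derivative_iff_has_vector_derivative)
  qed
  moreover have "F h - F 0 = h powr (c+1)/(c+1)" unfolding F_def by simp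
  ultimately show ?thesis by simp
qed

lemma main_bound:
  fixes \<alpha> h0 h :: real and y :: "real \<Rightarrow> real" and D :: "nat \<Rightarrow> real \<Rightarrow> real" and M :: real
  assumes a: "0 < \<alpha>" "\<alpha> < 1" and h: "0 < h" "h < h0"
    and D0: "\<forall>x\<in>{0..h0}. D 0 x = y x"
    and Dd: "\<forall>k<2. \<forall>x\<in>{0..h0}. (D k has_real_derivative D (Suc k) x) (at x within {0..h0})"
    and Dc: "\<forall>k\<le>2. continuous_on {0..h0} (D k)"
    and M: "\<forall>x\<in>{0..h0}. \<bar>D 2 x\<bar> \<le> M"
  shows "\<bar>y h - y 0 - h powr \<alpha> * Gamma (2 - \<alpha>) * caputo \<alpha> y h\<bar> \<le> 2 * M * h^2"
proof -
  have M0: "0 \<le> M" using M[rule_format, of 0] h by auto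
  have d0: "\<And>x. x \<in> {0..h0} \<Longrightarrow> (D 0 has_real_derivative D 1 x) (at x within {0..h0})"
    using Dd by auto
  have d1: "\<And>x. x \<in> {0..h0} \<Longrightarrow> (D 1 has_real_derivative D 2 x) (at x within {0..h0})"
    using Dd by (auto simp: numeral_2_eq_2)
  have c1: "continuous_on {0..h0} (D 1)" using Dc by auto
  have lip: "\<bar>D 1 a - D 1 b\<bar> \<le> M * \<bar>a - b\<bar>" if "a \<in> {0..h0}" "b \<in> {0..h0}" for a b
    using field_differentiable_bound[of "{0..h0}" "D 1" "D 2" M a b] d1 M that by auto
  have tay: "\<bar>D 0 h - D 0 0 - h * D 1 h\<bar> \<le> M * h * h"
  proof -
    have "norm ((\<lambda>t. D 0 t - t * D 1 h) h - (\<lambda>t. D 0 t - t * D 1 h) 0) \<le> (M*h) * norm (h - 0)"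
    proof (rule field_differentiable_bound[of "{0..h}" _ "\<lambda>t. D 1 t - D 1 h"])
      show "convex {0..h}" by simp
      fix z assume z: "z \<in> {0..h}"
      then have zz: "z \<in> {0..h0}" using h by auto
      have "(D 0 has_real_derivative D 1 z) (at z within {0..h})"
        using d0[OF zz] by (rule DERIV_subset) (use h in auto)
      then show "((\<lambda>t. D 0 t - t * D 1 h) has_field_derivative D 1 z - D 1 h) (at z within {0..h})"
        by (auto intro!: derivative_eq_intros)
      have "\<bar>D 1 z - D 1 h\<bar> \<le> M * \<bar>z - h\<bar>" using lip[OF zz] h by auto
      also have "\<dots> \<le> M * h" using z M0 by (intro mult_left_mono) auto
      finally show "norm (D 1 z - D 1 h) \<le> M * h" by simp
    qed (use h in auto)
    then show ?thesis using h by simp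
  qed
  have dy: "deriv y x = D 1 x" if x: "x \<in> {0<..<h0}" for x
  proof -
    have "(D 0 has_real_derivative D 1 x) (at x)"
      using d0[of x] x by (auto simp: at_within_interior[of x "{0..h0}"])
    then have "(y has_real_derivative D 1 x) (at x)"
      by (rule has_field_derivative_transform_within_open[of _ _ _ "{0<..<h0}"]) (use x D0 in auto)
    then show ?thesis by (rule DERIV_imp_deriv)
  qed
  define e where "e = (\<lambda>\<xi>. (D 1 \<xi> - D 1 h) / (h - \<xi>) powr \<alpha>)"
  have ebound: "\<bar>e \<xi>\<bar> \<le> M * (h - \<xi>) powr (1 - \<alpha>)" if "\<xi> \<in> {0..h}" for \<xi>
  proof (cases "\<xi> = h")
    case True then show ?thesis by (simp add: e_def)
  next
    case False
    then have pos: "h - \<xi> > 0" using that by auto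
    have "\<bar>D 1 \<xi> - D 1 h\<bar> \<le> M * (h - \<xi>)" using lip[of \<xi> h] that h by auto
    then have "\<bar>e \<xi>\<bar> \<le> M * (h - \<xi>) / (h - \<xi>) powr \<alpha>"
      unfolding e_def using pos by (simp add: abs_div divide_right_mono)
    also have "\<dots> = M * (h - \<xi>) powr (1 - \<alpha>)"
      using pos by (simp add: powr_diff)
    finally show ?thesis .
  qed
  have econt: "continuous_on {0..h} e"
    unfolding continuous_on_eq_continuous_within
  proof
    fix x assume x: "x \<in> {0..h}"
    show "continuous (at x within {0..h}) e"
    proof (cases "x = h")
      case False
      then have "h - x > 0" using x by auto
      have "continuous (at x within {0..h}) (D 1)"
        using continuous_on_subset[OF c1, of "{0..h}"] x h
        by (auto simp: continuous_on_eq_continuous_within)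
      then show ?thesis unfolding e_def using \<open>h - x > 0\<close>
        by (intro continuous_intros) auto
    next
      case True
      have f0: "((\<lambda>\<xi>. (h - \<xi>) powr (1 - \<alpha>)) \<longlongrightarrow> 0) (at h within {0..h})"
      proof -
        have "continuous_on {0..h} (\<lambda>\<xi>. (h - \<xi>) powr (1 - \<alpha>))"
          using a by (intro continuous_on_powr' continuous_intros) auto
        then have "((\<lambda>\<xi>. (h - \<xi>) powr (1 - \<alpha>)) \<longlongrightarrow> (h - h) powr (1 - \<alpha>)) (at h within {0..h})"
          using h unfolding continuous_on_def by (metis atLeastAtMost_iff order_refl less_imp_le)
        then show ?thesis by simp
      qed
      have "(e \<longlongrightarrow> 0) (at h within {0..h})"
        apply (rule tendsto_0_le[OF f0, of _ M])
        using ebound a by (auto simp: eventually_at_filter mult.commute)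
      then show ?thesis using True by (simp add: continuous_within e_def)
    qed
  qed
  then have eint: "e integrable_on {0..h}" by (rule integrable_continuous_interval)
  have p1: "((\<lambda>\<xi>. (h-\<xi>) powr (-\<alpha>)) has_integral h powr (1-\<alpha>)/(1-\<alpha>)) {0..h}"
    using powr_int[of h "-\<alpha>"] a h by simp
  have p2: "((\<lambda>\<xi>. (h-\<xi>) powr (1-\<alpha>)) has_integral h powr (2-\<alpha>)/(2-\<alpha>)) {0..h}"
    using powr_int[of h "1-\<alpha>"] a h by simp
  define E where "E = integral {0..h} e"
  have Eb: "\<bar>E\<bar> \<le> M * (h powr (2-\<alpha>)/(2-\<alpha>))"
  proof -
    have "norm E \<le> integral {0..h} (\<lambda>\<xi>. M * (h-\<xi>) powr (1-\<alpha>))"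
      unfolding E_def
      by (rule integral_norm_bound_integral[OF eint]) (use has_integral_mult_right[OF p2, of M] ebound in \<open>auto intro: has_integral_integrable\<close>)
    also have "\<dots> = M * (h powr (2-\<alpha>)/(2-\<alpha>))"
      using p2 by (simp add: integral_mult_right integral_unique)
    finally show ?thesis by simp
  qed
  have I: "integral {0..h} (\<lambda>\<xi>. deriv y \<xi> / (h - \<xi>) powr \<alpha>) = D 1 h * (h powr (1-\<alpha>)/(1-\<alpha>)) + E"
  proof -
    have "integral {0..h} (\<lambda>\<xi>. deriv y \<xi> / (h - \<xi>) powr \<alpha>)
        = integral {0..h} (\<lambda>\<xi>. D 1 h * (h-\<xi>) powr (-\<alpha>) + e \<xi>)"
    proof (rule integral_spike[of "{0,h}"])
      fix x assume x: "x \<in> {0..h} - {0,h}"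
      then have "h - x > 0" by auto
      then show "D 1 h * (h-x) powr (-\<alpha>) + e x = deriv y x / (h - x) powr \<alpha>"
        using dy[of x] x h unfolding e_def by (auto simp: powr_minus_divide field_simps)
    qed auto
    also have "\<dots> = D 1 h * (h powr (1-\<alpha>)/(1-\<alpha>)) + E"
      unfolding E_def using p1 eint has_integral_integrable[OF has_integral_mult_right[OF p1, of "D 1 h"]]
      by (subst integral_add) (auto simp: integral_mult_right integral_unique intro: has_integral_integrable)
    finally show ?thesis .
  qed
  have G: "Gamma (2 - \<alpha>) = (1 - \<alpha>) * Gamma (1 - \<alpha>)"
    proof -
    have "1 - \<alpha> \<notin> \<int>\<^sub>\<le>\<^sub>0" using a by (auto dest: nonpos_Ints_nonpos)
    then show ?thesis using Gamma_plus1[of "1 - \<alpha>"] by simp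
  qed
  have Gpos: "Gamma (1 - \<alpha>) > 0" using a by (intro Gamma_real_pos) auto
  have key: "h powr \<alpha> * Gamma (2 - \<alpha>) * caputo \<alpha> y h = h * D 1 h + h powr \<alpha> * (1 - \<alpha>) * E"
  proof -
    have "h powr \<alpha> * Gamma (2 - \<alpha>) * caputo \<alpha> y h
        = h powr \<alpha> * (1 - \<alpha>) * (D 1 h * (h powr (1-\<alpha>)/(1-\<alpha>)) + E)"
      unfolding caputo_def I G using Gpos by simp
    also have "\<dots> = D 1 h * (h powr \<alpha> * h powr (1-\<alpha>)) + h powr \<alpha> * (1 - \<alpha>) * E"
      using a by (simp add: field_simps)
    also have "h powr \<alpha> * h powr (1-\<alpha>) = h"
      using h by (simp add: powr_add[symmetric])
    finally show ?thesis by simp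
  qed
  have "\<bar>h powr \<alpha> * (1 - \<alpha>) * E\<bar> \<le> h powr \<alpha> * (1 - \<alpha>) * (M * (h powr (2-\<alpha>)/(2-\<alpha>)))"
  proof -
    have nn: "0 \<le> h powr \<alpha> * (1 - \<alpha>)" using a by simp
    show ?thesis using mult_left_mono[OF Eb nn] nn a by (simp add: abs_mult)
  qed
  also have "\<dots> = M * (h powr \<alpha> * h powr (2-\<alpha>)) * ((1 - \<alpha>)/(2-\<alpha>))"
    by (simp add: field_simps)
  also have "h powr \<alpha> * h powr (2-\<alpha>) = h^2"
    using h by (simp add: powr_add[symmetric] powr_realpow)
  also have "M * h^2 * ((1 - \<alpha>)/(2-\<alpha>)) \<le> M * h^2 * 1"
    using a M0 by (intro mult_left_mono) auto
  finally have B2: "\<bar>h powr \<alpha> * (1 - \<alpha>) * E\<bar> \<le> M * h^2" by simp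
  have yh: "y h = D 0 h" "y 0 = D 0 0" using D0 h by auto
  show ?thesis unfolding key yh using tay B2 by (simp add: power2_eq_square)
qed

theorem lemma11:
  fixes \<alpha> h0 :: real
  assumes "0 < \<alpha>" "\<alpha> < 1" "0 < h0"
  shows "\<exists>r::nat. \<forall>y. Cr_on r {0..h0} y \<longrightarrow>
    (\<lambda>h. y h - y 0 - h powr \<alpha> * Gamma (2 - \<alpha>) * caputo \<alpha> y h)
      \<in> O[at_right 0](\<lambda>h. h ^ 2)"
proof (intro exI[of _ 2] allI impI)
  fix y assume "Cr_on 2 {0..h0} y"
  then obtain D :: "nat \<Rightarrow> real \<Rightarrow> real" where
    D0: "\<forall>x\<in>{0..h0}. D 0 x = y x"
    and Dd: "\<forall>k<2. \<forall>x\<in>{0..h0}. (D k has_real_derivative D (Suc k) x) (at x within {0..h0})"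
    and Dc: "\<forall>k\<le>2. continuous_on {0..h0} (D k)"
    unfolding Cr_on_def by blast
  have "compact (D 2 ` {0..h0})"
    using Dc by (intro compact_continuous_image) auto
  then obtain M where M: "\<forall>x\<in>{0..h0}. \<bar>D 2 x\<bar> \<le> M"
    using compact_imp_bounded bounded_real by (metis image_eqI)
  show "(\<lambda>h. y h - y 0 - h powr \<alpha> * Gamma (2 - \<alpha>) * caputo \<alpha> y h) \<in> O[at_right 0](\<lambda>h. h ^ 2)"
  proof (rule bigoI[of _ "2 * M"])
    show "\<forall>\<^sub>F h in at_right 0. norm (y h - y 0 - h powr \<alpha> * Gamma (2 - \<alpha>) * caputo \<alpha> y h) \<le> 2 * M * norm (h ^ 2)"
      unfolding eventually_at_right_field
      using main_bound[OF assms(1,2) _ _ D0 Dd Dc M] assms(3) by (intro exI[of _ h0]) auto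
  qed
qed
end
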